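(* Let $n\ge3$, let $u^+\in C^{0,1}(\overline{B_1^+})$ and $u^-\in C^{0,1}(\overline{B_1^-})$ be positive functions with $u^+=u^-$ on $B_1\cap\{x_n=0\}$. Suppose $u^+$ is a viscosity supersolution of $\lambda(A_u)\in\partial\Gamma_2^+$ in $B_1^+$ with $-\partial u/\partial x_n=0$ on $B_1\cap\{x_n=0\}$, and $u^-$ is a viscosity supersolution of $\lambda(A_u)\in\partial\Gamma_2^+$ in $B_1^-$ with $\partial u/\partial x_n=0$ on $B_1\cap\{x_n=0\}$. Then the function $u=u^+$ on $\{x_n\ge0\}$, $u=u^-$ on $\{x_n<0\}$, is a $C^{0,1}$ viscosity supersolution of $\lambda(A_u)\in\partial\Gamma_2^+$ in $B_1$.
   Context: $B_1^\pm=B_1(0)\cap\{\pm x_n>0\}$ in $\mathbb{R}^n$ with Euclidean metric. For positive $C^2$ $u$, $A_u=-\frac2{n-2}\frac{\nabla^2u}{u}+\frac{2n}{(n-2)^2}\frac{\mathrm du\otimes\mathrm du}{u^2}-\frac2{(n-2)^2}\frac{|\nabla u|^2}{u^2}I$ (Schouten tensor of $u^{4/(n-2)}|\mathrm dx|^2$ up to the conformal factor), $\lambda(A_u)$ its eigenvalues, $\Gamma_2^+=\{\lambda:\sum\lambda_i>0,\sum_{i<j}\lambda_i\lambda_j>0\}$. Viscosity supersolution in an open set $U$: $u$ positive continuous, and whenever $\psi\in C^2$, $u-\psi\ge0$ near $\bar x\in U$ with $(u-\psi)(\bar x)=0$, one has $\lambda(A_\psi)(\bar x)\in\overline{\Gamma_2^+}$.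 Supersolution in $B_1^+$ with $-\partial u/\partial x_n=0$ on the flat boundary $\Gamma=B_1\cap\{x_n=0\}$: $u\in C^0(B_1^+\cup\Gamma)$ is a supersolution in $B_1^+$ and, whenever $\psi\in C^2(B_1^+\cup\Gamma)$ and $u-\psi$ has a local minimum zero at $\bar x\in\Gamma$, either $\lambda(A_\psi)(\bar x)\in\overline{\Gamma_2^+}$ or $-\partial_{x_n}\psi(\bar x)\ge0$. For $B_1^-$ with $\partial u/\partial x_n=0$: same, with the alternative $\partial_{x_n}\psi(\bar x)\ge0$. *)

theory Defs
  imports "HOL-Analysis.Analysis"
begin

text \<open>Points of R^n are vectors real^'n, the index type carrying a linear order
so that the last coordinate x_n is available.\<close>

definition lastidx :: "'n::{finite,linorder}" where
  "lastidx = Max UNIV"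

definition ball_plus :: "(real^'n::{finite,linorder}) set" where
  "ball_plus = {x \<in> ball 0 1. x $ lastidx > 0}"

definition ball_minus :: "(real^'n::{finite,linorder}) set" where
  "ball_minus = {x \<in> ball 0 1. x $ lastidx < 0}"

definition flat_bdry :: "(real^'n::{finite,linorder}) set" where
  "flat_bdry = {x \<in> ball 0 1. x $ lastidx = 0}"

definition Gamma2 :: "(real^'n::{finite,linorder}) set" where
  "Gamma2 = {l. (\<Sum>i\<in>UNIV. l $ i) > 0 \<and>
                (\<Sum>i\<in>UNIV. \<Sum>j\<in>{j. i < j}. l $ i * l $ j) > 0}"

definition diag_mat :: "real^'n \<Rightarrow> real^'n^'n" where
  "diag_mat l = (\<chi> i j. if i = j then l $ i else 0)"

definition eigvals :: "real^'n^'n \<Rightarrow> real^'n \<Rightarrow> bool" where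
  "eigvals A l \<longleftrightarrow> (\<exists>Q. orthogonal_matrix Q \<and> A = Q ** diag_mat l ** transpose Q)"

text \<open>lambda(A) in the closure of Gamma_2^+ (Gamma_2^+ is permutation invariant,
so the choice of ordering of the eigenvalues is irrelevant).\<close>
definition eig_in_clGamma2 :: "real^('a::{finite,linorder})^('a::{finite,linorder}) \<Rightarrow> bool" where
  "eig_in_clGamma2 A \<longleftrightarrow> (\<exists>l. eigvals A l \<and> l \<in> closure Gamma2)"

text \<open>A_psi at a point, in terms of the value v = psi(x), gradient g and Hessian H.\<close>
definition schoutenA :: "real \<Rightarrow> real^'n \<Rightarrow> real^'n^'n \<Rightarrow> real^'n^'n" where
  "schoutenA v g H = (let n = real CARD('n) in
     (\<chi> i j. - (2 / (n - 2)) * (H $ i $ j) / v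
             + (2 * n / (n - 2)^2) * (g $ i * g $ j) / v^2
             - (2 / (n - 2)^2) * (norm g)^2 / v^2 * (if i = j then 1 else 0)))"

definition C2_data :: "(real^'n \<Rightarrow> real) \<Rightarrow> (real^'n \<Rightarrow> real^'n) \<Rightarrow> (real^'n \<Rightarrow> real^'n^'n)
    \<Rightarrow> (real^'n) set \<Rightarrow> bool" where
  "C2_data psi g H U \<longleftrightarrow> open U \<and>
     (\<forall>y\<in>U. (psi has_derivative (\<lambda>h. g y \<bullet> h)) (at y) \<and>
             (g has_derivative (\<lambda>h. H y *v h)) (at y)) \<and> continuous_on U H"

definition visc_super :: "(real^('n::{finite,linorder})) set \<Rightarrow> (real^('n::{finite,linorder}) \<Rightarrow> real) \<Rightarrow> bool" where
  "visc_super U u \<longleftrightarrow> (\<forall>x\<in>U. u x > 0) \<and> continuous_on U u \<and>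
     (\<forall>psi g H x e. x \<in> U \<and> e > 0 \<and> C2_data psi g H (ball x e) \<and>
        (\<forall>y \<in> ball x e \<inter> U. u y - psi y \<ge> 0) \<and> u x = psi x
        \<longrightarrow> eig_in_clGamma2 (schoutenA (psi x) (g x) (H x)))"

text \<open>Supersolution in D (= B_1^+ or B_1^-) with boundary condition
 s * du/dx_n = 0 on the flat boundary (s = -1 for B_1^+, s = 1 for B_1^-).\<close>
definition visc_super_bdry :: "real \<Rightarrow> (real^('n::{finite,linorder})) set \<Rightarrow> (real^('n::{finite,linorder}) \<Rightarrow> real) \<Rightarrow> bool" where
  "visc_super_bdry s D u \<longleftrightarrow> continuous_on (D \<union> flat_bdry) u \<and> visc_super D u \<and>
     (\<forall>psi g H x e. x \<in> flat_bdry \<and> e > 0 \<and> C2_data psi g H (ball x e) \<and>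
        (\<forall>y \<in> ball x e \<inter> (D \<union> flat_bdry). u y - psi y \<ge> 0) \<and> u x = psi x
        \<longrightarrow> eig_in_clGamma2 (schoutenA (psi x) (g x) (H x)) \<or> s * (g x $ lastidx) \<ge> 0)"

end

theory Submission
  imports Defs
begin

lemma cont_mm:
  fixes f :: "'a::topological_space \<Rightarrow> real^'m::finite^'n::finite" and g :: "'a \<Rightarrow> real^'k::finite^'m"
  assumes "continuous_on S f" "continuous_on S g"
  shows "continuous_on S (\<lambda>x. f x ** g x)"
  unfolding matrix_matrix_mult_def
  by (intro continuous_intros assms)

lemma cont_tr:
  fixes f :: "'a::topological_space \<Rightarrow> real^'m::finite^'n::finite"
  assumes "continuous_on S f"
  shows "continuous_on S (\<lambda>x. transpose (f x))"
  unfolding transpose_def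
  by (intro continuous_intros assms)

lemma cont_diag:
  fixes f :: "'a::topological_space \<Rightarrow> real^'n::finite"
  assumes "continuous_on S f"
  shows "continuous_on S (\<lambda>x. diag_mat (f x))"
  unfolding diag_mat_def
  apply (intro continuous_on_vec_lambda)
  subgoal for i j by (cases "i = j") (auto intro!: continuous_intros assms)
  done

lemma bounded_orth: "bounded {Q::real^'n::finite^'n. orthogonal_matrix Q}"
proof -
  have "norm Q \<le> real CARD('n)" if "orthogonal_matrix Q" for Q :: "real^'n^'n"
  proof -
    have r: "norm (Q $ i) = 1" for i
      using that unfolding orthogonal_matrix_orthonormal_rows by (simp add: row_def)
    have "norm Q \<le> (\<Sum>i\<in>UNIV. norm (Q $ i))"
      unfolding norm_vec_def by (rule L2_set_le_sum) auto
    also have "\<dots> = real CARD('n)" using r by simp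
    finally show ?thesis .
  qed
  then show ?thesis unfolding bounded_iff by blast
qed

lemma closed_orth: "closed {Q::real^'n::finite^'n. orthogonal_matrix Q}"
  unfolding orthogonal_matrix_def
  by (intro closed_Collect_conj closed_Collect_eq cont_mm cont_tr continuous_intros)

lemma compact_orth: "compact {Q::real^'n::finite^'n. orthogonal_matrix Q}"
  using bounded_orth closed_orth compact_eq_bounded_closed by blast

lemma closed_Collect_in: "continuous_on UNIV f \<Longrightarrow> closed T \<Longrightarrow> closed {x. f x \<in> T}"
  using continuous_closed_preimage[of UNIV f T] by (simp add: vimage_def)

definition dv :: "real^'n::finite^'n \<Rightarrow> real^'n^'n \<Rightarrow> real^'n" where
  "dv Q A = (\<chi> i. (transpose Q ** A ** Q) $ i $ i)"

lemma cont_dv: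
  fixes f :: "'a::topological_space \<Rightarrow> real^'n::finite^'n"
  assumes "continuous_on S f" "continuous_on S g"
  shows "continuous_on S (\<lambda>x. dv (f x) (g x))"
  unfolding dv_def
  by (intro continuous_intros cont_mm cont_tr assms)

lemma eig_iff:
  fixes A :: "real^('n::{finite,linorder})^('n::{finite,linorder})"
  shows "eig_in_clGamma2 A \<longleftrightarrow>
   (\<exists>Q. Q \<in> {Q. orthogonal_matrix Q} \<and> (Q, A) \<in> {p. orthogonal_matrix (fst p) \<and>
      snd p = fst p ** diag_mat (dv (fst p) (snd p)) ** transpose (fst p) \<and>
      dv (fst p) (snd p) \<in> closure Gamma2})"
proof
  assume "eig_in_clGamma2 A"
  then obtain Q l where Q: "orthogonal_matrix Q" "A = Q ** diag_mat l ** transpose Q" "l \<in> closure Gamma2"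
    unfolding eig_in_clGamma2_def eigvals_def by blast
  have "transpose Q ** A ** Q = (transpose Q ** Q) ** diag_mat l ** (transpose Q ** Q)"
    using Q(2) by (simp add: matrix_mul_assoc)
  then have "transpose Q ** A ** Q = diag_mat l"
    using Q(1) unfolding orthogonal_matrix_def by (simp add: matrix_mul_lid matrix_mul_rid)
  then have "dv Q A = l" unfolding dv_def diag_mat_def by (simp add: vec_eq_iff)
  then show "\<exists>Q. Q \<in> {Q. orthogonal_matrix Q} \<and> (Q, A) \<in> {p. orthogonal_matrix (fst p) \<and>
      snd p = fst p ** diag_mat (dv (fst p) (snd p)) ** transpose (fst p) \<and>
      dv (fst p) (snd p) \<in> closure Gamma2}" using Q by auto
next
  assume "\<exists>Q. Q \<in> {Q. orthogonal_matrix Q} \<and> (Q, A) \<in> {p. orthogonal_matrix (fst p) \<and>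
      snd p = fst p ** diag_mat (dv (fst p) (snd p)) ** transpose (fst p) \<and>
      dv (fst p) (snd p) \<in> closure Gamma2}"
  then show "eig_in_clGamma2 A" unfolding eig_in_clGamma2_def eigvals_def by auto
qed

lemma closed_orth_fst: "closed {p::(real^'n::finite^'n) \<times> 'b::topological_space. orthogonal_matrix (fst p)}"
  using closed_vimage_fst[OF closed_orth] by (simp add: vimage_def)

lemma closed_eig: "closed {A::real^('n::{finite,linorder})^('n::{finite,linorder}). eig_in_clGamma2 A}"
  unfolding eig_iff
  apply (rule closed_compact_projection[OF compact_orth])
  apply (intro closed_Collect_conj closed_Collect_eq cont_mm cont_tr cont_diag cont_dv continuous_intros
     closed_Collect_in closed_closure closed_orth_fst)
  done

lemma schoutenA_tendsto:
  fixes G :: "'a \<Rightarrow> real^'n::finite" and Hh :: "'a \<Rightarrow> real^'n^'n"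
  assumes "(v \<longlongrightarrow> v0) F" "(G \<longlongrightarrow> G0) F" "(Hh \<longlongrightarrow> H0) F" "v0 \<noteq> 0"
  shows "((\<lambda>k. schoutenA (v k) (G k) (Hh k)) \<longlongrightarrow> schoutenA v0 G0 H0) F"
  unfolding schoutenA_def Let_def
  by (intro tendsto_intros assms) (simp_all add: assms)

lemma C2_pert:
  fixes psi :: "real^'n::{finite,linorder} \<Rightarrow> real"
  assumes "C2_data psi g H U" "open V" "V \<subseteq> U"
  shows "C2_data (\<lambda>z. psi z + c + d * z $ lastidx - M * ((z - x0) \<bullet> (z - x0)))
     (\<lambda>z. g z + d *\<^sub>R axis lastidx 1 - (2 * M) *\<^sub>R (z - x0))
     (\<lambda>z. H z - (2 * M) *\<^sub>R mat 1) V"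
  unfolding C2_data_def
proof (intro conjI ballI)
  show "open V" by fact
  fix y assume y: "y \<in> V"
  then have yU: "y \<in> U" using assms by auto
  have d1: "(psi has_derivative (\<lambda>h. g y \<bullet> h)) (at y)" and d2: "(g has_derivative (\<lambda>h. H y *v h)) (at y)"
    using assms(1) yU unfolding C2_data_def by auto
  have "((\<lambda>z. psi z + c + d * z $ lastidx - M * ((z - x0) \<bullet> (z - x0))) has_derivative
     (\<lambda>h. g y \<bullet> h + 0 + d * h $ lastidx - M * ((y - x0) \<bullet> h + h \<bullet> (y - x0)))) (at y)"
    apply (rule derivative_eq_intros d1 bounded_linear_imp_has_derivative bounded_linear_vec_nth | simp)+
    done
  then show "((\<lambda>z. psi z + c + d * z $ lastidx - M * ((z - x0) \<bullet> (z - x0))) has_derivative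
     (\<lambda>h. (g y + d *\<^sub>R axis lastidx 1 - (2 * M) *\<^sub>R (y - x0)) \<bullet> h)) (at y)"
    by (rule has_derivative_eq_rhs) (auto simp: fun_eq_iff inner_add_left inner_diff_left inner_axis' inner_axis inner_commute algebra_simps)
  show "((\<lambda>z. g z + d *\<^sub>R axis lastidx 1 - (2 * M) *\<^sub>R (z - x0)) has_derivative
     (\<lambda>h. (H y - (2 * M) *\<^sub>R mat 1) *v h)) (at y)"
    apply (rule has_derivative_eq_rhs)
     apply (rule derivative_eq_intros d2 | simp)+
    apply (simp add: fun_eq_iff matrix_vector_mult_diff_rdistrib scaleR_matrix_vector_assoc[symmetric])
    done
next
  show "continuous_on V (\<lambda>z. H z - (2 * M) *\<^sub>R mat 1)"
    using assms unfolding C2_data_def by (auto intro!: continuous_intros intro: continuous_on_subset)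
qed

lemma bdry_use:
  assumes "visc_super_bdry s D u" "x \<in> flat_bdry" "e > 0" "C2_data psi g H (ball x e)"
    "\<And>y. y \<in> ball x e \<inter> (D \<union> flat_bdry) \<Longrightarrow> u y - psi y \<ge> 0" "u x = psi x"
  shows "eig_in_clGamma2 (schoutenA (psi x) (g x) (H x)) \<or> s * (g x $ lastidx) \<ge> 0"
  using assms unfolding visc_super_bdry_def by blast

lemma super_use:
  assumes "visc_super U u" "x \<in> U" "e > 0" "C2_data psi g H (ball x e)"
    "\<And>y. y \<in> ball x e \<inter> U \<Longrightarrow> u y - psi y \<ge> 0" "u x = psi x"
  shows "eig_in_clGamma2 (schoutenA (psi x) (g x) (H x))"
  using assms unfolding visc_super_def by blast

lemma key_step:
  fixes up psi :: "real^'n::{finite,linorder} \<Rightarrow> real"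
  assumes bd: "visc_super_bdry (-1) ball_plus up"
    and C2: "C2_data psi g H (ball x0 e)"
    and x0: "x0 \<in> flat_bdry"
    and r: "0 < r" "r < e" "cball x0 r \<subseteq> ball 0 1"
    and ge: "\<forall>y \<in> cball x0 r. y $ lastidx \<ge> 0 \<longrightarrow> up y - psi y \<ge> 0"
    and eq: "up x0 = psi x0"
    and gn: "g x0 $ lastidx \<ge> 0"
    and M: "M > 0" and d: "d > 0" "d < M * r"
  shows "\<exists>y m. y \<in> ball x0 r \<and> M * ((y - x0) \<bullet> (y - x0)) \<le> d * r \<and> -(d*r) \<le> m \<and> m \<le> 0 \<and>
     eig_in_clGamma2 (schoutenA (psi y + m + d * y $ lastidx - M * ((y - x0) \<bullet> (y - x0)))
        (g y + d *\<^sub>R axis lastidx 1 - (2 * M) *\<^sub>R (y - x0)) (H y - (2 * M) *\<^sub>R mat 1))"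
proof -
  define K where "K = cball x0 r \<inter> {y. 0 \<le> y $ lastidx}"
  define f where "f y = up y - (psi y + d * y $ lastidx - M * ((y - x0) \<bullet> (y - x0)))" for y
  have x0n: "x0 $ lastidx = 0" and x0b: "x0 \<in> ball 0 1" using x0 unfolding flat_bdry_def by auto
  have cK: "compact K" unfolding K_def
    by (intro compact_Int_closed compact_cball closed_Collect_le continuous_intros)
  have x0K: "x0 \<in> K" unfolding K_def using r x0n by auto
  have Ksub: "K \<subseteq> ball_plus \<union> flat_bdry"
    unfolding K_def ball_plus_def flat_bdry_def using r(3) by force
  have Ksub2: "K \<subseteq> ball x0 e" unfolding K_def using r by auto
  have cup: "continuous_on (ball_plus \<union> flat_bdry) up" using bd[unfolded visc_super_bdry_def] by (rule conjunct1)
  have cpsi: "continuous_on (ball x0 e) psi"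
    using C2 unfolding C2_data_def
    by (intro continuous_at_imp_continuous_on ballI has_derivative_continuous) (auto simp: open_ball)
  have cf: "continuous_on K f" unfolding f_def
    by (intro continuous_intros continuous_on_subset[OF cup Ksub] continuous_on_subset[OF cpsi Ksub2])
  obtain y where yK: "y \<in> K" and ymin: "\<And>z. z \<in> K \<Longrightarrow> f y \<le> f z"
    using continuous_attains_inf[OF cK _ cf] x0K by blast
  define m where "m = f y"
  define q where "q = (y - x0) \<bullet> (y - x0)"
  have q0: "q \<ge> 0" unfolding q_def by simp
  have "f x0 = 0" unfolding f_def using x0n eq by simp
  then have m0: "m \<le> 0" using ymin[OF x0K] unfolding m_def by simp
  have yc: "y \<in> cball x0 r" and yn: "0 \<le> y $ lastidx" using yK unfolding K_def by auto
  have "up y - psi y \<ge> 0" using ge yc yn by auto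
  then have mlow: "m \<ge> - d * y $ lastidx + M * q" unfolding m_def f_def q_def by simp
  have "y $ lastidx = (y - x0) $ lastidx" using x0n by simp
  also have "\<dots> \<le> norm (y - x0)" using component_le_norm_cart[of "y - x0" lastidx] by simp
  also have "\<dots> \<le> r" using yc by (simp add: dist_norm norm_minus_commute)
  finally have ynr: "y $ lastidx \<le> r" .
  have dyn: "d * y $ lastidx \<le> d * r" using ynr d by (intro mult_left_mono) auto
  have Mq: "M * q \<le> d * r" using mlow m0 dyn by linarith
  have Mq0: "M * q \<ge> 0" using M q0 by simp
  have mr: "- (d * r) \<le> m" using mlow dyn Mq0 by linarith
  define phi where "phi c z = psi z + c + d * z $ lastidx - M * ((z - x0) \<bullet> (z - x0))" for c z
  define gg where "gg z = g z + d *\<^sub>R axis lastidx 1 - (2 * M) *\<^sub>R (z - x0)" for z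
  define HH where "HH z = H z - (2 * M) *\<^sub>R mat 1" for z
  have phif: "up z - phi c z = f z - c" for c z unfolding phi_def f_def by simp
  have C2V: "C2_data (phi c) gg HH V" if "open V" "V \<subseteq> ball x0 e" for c V
    unfolding phi_def gg_def HH_def by (rule C2_pert[OF C2 that])
  show ?thesis
  proof (cases "y $ lastidx = 0")
    case True
    then have "M * q \<le> 0" using mlow m0 by simp
    then have "q = 0" using M q0 by (simp add: mult_le_0_iff)
    then have yx: "y = x0" unfolding q_def by simp
    have mz: "m = 0" using mlow True m0 Mq0 by simp
    have "eig_in_clGamma2 (schoutenA (phi 0 x0) (gg x0) (HH x0)) \<or> (-1) * (gg x0 $ lastidx) \<ge> 0"
    proof (rule bdry_use[OF bd x0 r(1)])
      fix z assume z: "z \<in> ball x0 r \<inter> (ball_plus \<union> flat_bdry)"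
      then have "z \<in> K" unfolding K_def ball_plus_def flat_bdry_def by auto
      then have "f z \<ge> 0" using ymin mz unfolding m_def by force
      then show "0 \<le> up z - phi 0 z" using phif[of z 0] by simp
    next
      show "C2_data (phi 0) gg HH (ball x0 r)" by (rule C2V) (use r in auto)
    next
      show "up x0 = phi 0 x0" unfolding phi_def using eq x0n by simp
    qed
    moreover have "gg x0 $ lastidx > 0" unfolding gg_def using gn d by simp
    ultimately have "eig_in_clGamma2 (schoutenA (phi 0 x0) (gg x0) (HH x0))" by linarith
    then show ?thesis
      apply (intro exI[of _ x0] exI[of _ 0])
      using r d unfolding phi_def gg_def HH_def by auto
  next
    case False
    then have ypos: "y $ lastidx > 0" using yn by simp
    have "dist x0 y < r"
    proof (rule ccontr)
      assume "\<not> dist x0 y < r"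
      then have "dist x0 y = r" using yc by simp
      then have "q = r^2" unfolding q_def by (metis dist_norm norm_minus_commute power2_norm_eq_inner)
      then have "M * r * r \<le> d * r" using Mq by (simp add: power2_eq_square algebra_simps)
      then have "M * r \<le> d" using r by simp
      then show False using d by simp
    qed
    then have yb: "y \<in> ball x0 r" by simp
    define e' where "e' = r - dist x0 y"
    have e'p: "e' > 0" unfolding e'_def using \<open>dist x0 y < r\<close> by simp
    have bsub: "ball y e' \<subseteq> ball x0 r" unfolding e'_def
    proof
      fix z assume "z \<in> ball y (r - dist x0 y)"
      then have "dist y z < r - dist x0 y" by simp
      moreover have "dist x0 z \<le> dist x0 y + dist y z" by (rule dist_triangle)
      ultimately show "z \<in> ball x0 r" by simp
    qed
    have "y \<in> ball 0 1" using yb r(3) ball_subset_cball by blast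
    then have yplus: "y \<in> ball_plus" unfolding ball_plus_def using ypos by simp
    have "eig_in_clGamma2 (schoutenA (phi m y) (gg y) (HH y))"
    proof (rule super_use[OF bd[unfolded visc_super_bdry_def, THEN conjunct2, THEN conjunct1] yplus e'p])
      fix z assume z: "z \<in> ball y e' \<inter> ball_plus"
      then have "z \<in> K" using bsub unfolding K_def ball_plus_def by auto
      then have "f z \<ge> m" using ymin unfolding m_def by force
      then show "0 \<le> up z - phi m z" using phif[of z m] by simp
    next
      show "C2_data (phi m) gg HH (ball y e')" by (rule C2V) (use bsub r in auto)
    next
      show "up y = phi m y" using phif[of y m] unfolding m_def by simp
    qed
    then show ?thesis
      apply (intro exI[of _ y] exI[of _ m])
      using yb Mq mr m0 unfolding phi_def gg_def HH_def q_def by auto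
  qed
qed

lemma flat_case:
  fixes up psi :: "real^'n::{finite,linorder} \<Rightarrow> real"
  assumes bd: "visc_super_bdry (-1) ball_plus up"
    and C2: "C2_data psi g H (ball x0 e)" and e: "e > 0"
    and x0: "x0 \<in> flat_bdry"
    and ge: "\<forall>y \<in> ball x0 e \<inter> ball 0 1. y $ lastidx \<ge> 0 \<longrightarrow> up y - psi y \<ge> 0"
    and eq: "up x0 = psi x0"
    and gn: "g x0 $ lastidx \<ge> 0"
    and pos: "psi x0 > 0"
  shows "eig_in_clGamma2 (schoutenA (psi x0) (g x0) (H x0))"
proof -
  have x0b: "norm x0 < 1" using x0 unfolding flat_bdry_def by auto
  define r where "r = min (e/2) ((1 - norm x0)/2)"
  have r0: "r > 0" "r < e" unfolding r_def using e x0b by auto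
  have rsub: "cball x0 r \<subseteq> ball 0 1"
  proof
    fix y assume "y \<in> cball x0 r"
    then have "norm (y - x0) \<le> r" by (simp add: dist_norm norm_minus_commute)
    moreover have "norm y \<le> norm x0 + norm (y - x0)" by (metis norm_triangle_sub add.commute)
    ultimately show "y \<in> ball 0 1" unfolding r_def using x0b by auto
  qed
  have ge': "\<forall>y \<in> cball x0 r. y $ lastidx \<ge> 0 \<longrightarrow> up y - psi y \<ge> 0"
    using ge rsub r0 by auto
  define M where "M k = inverse (real (Suc k)) / 2" for k :: nat
  define d where "d k = r * (M k)^2" for k
  have Mpos: "M k > 0" and Mlt: "M k < 1" for k unfolding M_def by (auto simp: field_simps)
  have dpos: "d k > 0" and dlt: "d k < M k * r" for k
    using Mpos[of k] Mlt[of k] r0 unfolding d_def by (auto simp: power2_eq_square)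
  define P where "P k y m \<longleftrightarrow> y \<in> ball x0 r \<and> M k * ((y - x0) \<bullet> (y - x0)) \<le> d k * r \<and> -(d k*r) \<le> m \<and> m \<le> 0 \<and>
     eig_in_clGamma2 (schoutenA (psi y + m + d k * y $ lastidx - M k * ((y - x0) \<bullet> (y - x0)))
        (g y + d k *\<^sub>R axis lastidx 1 - (2 * M k) *\<^sub>R (y - x0)) (H y - (2 * M k) *\<^sub>R mat 1))" for k y m
  have "\<exists>y m. P k y m" for k
    unfolding P_def by (rule key_step[OF bd C2 x0 r0 rsub ge' eq gn Mpos dpos dlt])
  then have "\<forall>k. \<exists>p. P k (fst p) (snd p)" by simp
  from choice[OF this] obtain p where pP: "\<forall>k. P k (fst (p k)) (snd (p k))" by blast
  define Y where "Y k = fst (p k)" for k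
  define mm where "mm k = snd (p k)" for k
  have PY: "P k (Y k) (mm k)" for k using pP unfolding Y_def mm_def by simp
  have Y: "\<And>k. Y k \<in> ball x0 r" "\<And>k. M k * ((Y k - x0) \<bullet> (Y k - x0)) \<le> d k * r"
     "\<And>k. -(d k*r) \<le> mm k" "\<And>k. mm k \<le> 0" using PY unfolding P_def by simp_all
  have E: "\<And>k. eig_in_clGamma2 (schoutenA (psi (Y k) + mm k + d k * Y k $ lastidx - M k * ((Y k - x0) \<bullet> (Y k - x0)))
        (g (Y k) + d k *\<^sub>R axis lastidx 1 - (2 * M k) *\<^sub>R (Y k - x0)) (H (Y k) - (2 * M k) *\<^sub>R mat 1))"
    using PY unfolding P_def by simp
  have Mlim: "M \<longlonglongrightarrow> 0" unfolding M_def
    using tendsto_divide[OF LIMSEQ_inverse_real_of_nat tendsto_const, of 2] by simp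
  have dlim: "d \<longlonglongrightarrow> 0" unfolding d_def using tendsto_mult[OF tendsto_const tendsto_power[OF Mlim, of 2], of r] by simp
  define q where "q k = (Y k - x0) \<bullet> (Y k - x0)" for k
  have q0: "q k \<ge> 0" for k unfolding q_def by simp
  have qle: "q k \<le> r^2 * M k" for k
  proof -
    have e1: "d k * r = M k * (r^2 * M k)" unfolding d_def by (simp add: power2_eq_square)
    have "M k * q k \<le> M k * (r^2 * M k)" using Y(2)[of k] unfolding q_def e1 .
    then show ?thesis using Mpos[of k] by (simp only: mult_le_cancel_left_pos)
  qed
  have lim2: "(\<lambda>k. r^2 * M k) \<longlonglongrightarrow> 0" using tendsto_mult[OF tendsto_const Mlim, of "r^2"] by simp
  have qlim: "q \<longlonglongrightarrow> 0"
  proof (rule tendsto_sandwich[of "\<lambda>k. 0" _ _ "\<lambda>k. r^2 * M k"])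
    show "\<forall>\<^sub>F k in sequentially. 0 \<le> q k" using q0 by simp
    show "\<forall>\<^sub>F k in sequentially. q k \<le> r^2 * M k" using qle by simp
  qed (rule tendsto_const, rule lim2)
  have "(\<lambda>k. norm (Y k - x0)) \<longlonglongrightarrow> 0"
  proof -
    have "(\<lambda>k. sqrt (q k)) \<longlonglongrightarrow> 0" using tendsto_real_sqrt[OF qlim] by simp
    moreover have "sqrt (q k) = norm (Y k - x0)" for k unfolding q_def by (simp add: norm_eq_sqrt_inner)
    ultimately show ?thesis by simp
  qed
  then have "(\<lambda>k. Y k - x0) \<longlonglongrightarrow> 0" by (rule tendsto_norm_zero_cancel)
  then have Ylim: "Y \<longlonglongrightarrow> x0" by (rule LIM_zero_cancel)
  have mlim: "mm \<longlonglongrightarrow> 0"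
    by (rule tendsto_sandwich[of "\<lambda>k. -(d k*r)" _ _ "\<lambda>k. 0"])
       (use Y(3,4) tendsto_minus[OF tendsto_mult[OF dlim tendsto_const, of r]] in auto)
  have x0e: "x0 \<in> ball x0 e" using e by simp
  have dpsi: "(psi has_derivative (\<lambda>h. g x0 \<bullet> h)) (at x0)" and dg: "(g has_derivative (\<lambda>h. H x0 *v h)) (at x0)"
    using C2 x0e unfolding C2_data_def by auto
  have cpsi: "isCont psi x0" using has_derivative_continuous[OF dpsi] .
  have cg: "isCont g x0" using has_derivative_continuous[OF dg] .
  have cH: "isCont H x0" using C2 x0e unfolding C2_data_def using continuous_on_eq_continuous_at by blast
  have l1: "((\<lambda>k. psi (Y k) + mm k + d k * Y k $ lastidx - M k * q k) \<longlonglongrightarrow> psi x0 + 0 + 0 * x0 $ lastidx - 0 * 0)"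
    by (intro tendsto_intros isCont_tendsto_compose[OF cpsi Ylim] mlim dlim Mlim qlim Ylim)
  have l2: "((\<lambda>k. g (Y k) + d k *\<^sub>R axis lastidx 1 - (2 * M k) *\<^sub>R (Y k - x0)) \<longlonglongrightarrow>
       g x0 + 0 *\<^sub>R axis lastidx 1 - (2 * 0) *\<^sub>R (x0 - x0))"
    by (intro tendsto_intros isCont_tendsto_compose[OF cg Ylim] dlim Mlim Ylim)
  have l3: "((\<lambda>k. H (Y k) - (2 * M k) *\<^sub>R mat 1) \<longlonglongrightarrow> H x0 - (2 * 0) *\<^sub>R mat 1)"
    by (intro tendsto_intros isCont_tendsto_compose[OF cH Ylim] Mlim)
  have "((\<lambda>k. schoutenA (psi (Y k) + mm k + d k * Y k $ lastidx - M k * q k)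
        (g (Y k) + d k *\<^sub>R axis lastidx 1 - (2 * M k) *\<^sub>R (Y k - x0)) (H (Y k) - (2 * M k) *\<^sub>R mat 1))
      \<longlonglongrightarrow> schoutenA (psi x0) (g x0) (H x0))" (is "(?F \<longlongrightarrow> _) _")
    using schoutenA_tendsto[OF l1 l2 l3] pos by simp
  note lim = this
  have ev: "\<forall>\<^sub>F k in sequentially. ?F k \<in> {A. eig_in_clGamma2 A}"
    using E by (simp add: q_def)
  have "schoutenA (psi x0) (g x0) (H x0) \<in> {A. eig_in_clGamma2 A}"
    by (rule Lim_in_closed_set[OF closed_eig ev trivial_limit_sequentially lim])
  then show ?thesis by simp
qed

lemma near_closure:
  fixes x :: "real^'n::{finite,linorder}"
  assumes x: "norm x < 1" and sg: "\<sigma> = 1 \<or> \<sigma> = -1" and xs: "\<sigma> * x $ lastidx \<ge> 0"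
  shows "x \<in> closure {z \<in> ball 0 1. \<sigma> * z $ lastidx > 0}"
  unfolding closure_approachable
proof (intro allI impI)
  fix \<epsilon> :: real assume \<epsilon>: "\<epsilon> > 0"
  define t where "t = min (\<epsilon>/2) ((1 - norm x)/2)"
  have t1: "t \<le> \<epsilon>/2" "t \<le> (1 - norm x)/2" unfolding t_def by (rule min.cobounded1, rule min.cobounded2)
  have t: "t > 0" "t < \<epsilon>" "t < 1 - norm x" using t1 \<epsilon> x by (auto simp: t_def)
  define z where "z = x + (\<sigma> * t) *\<^sub>R axis lastidx 1"
  have nz: "norm ((\<sigma> * t) *\<^sub>R axis lastidx (1::real)) = t" using sg t by auto
  have "norm z \<le> norm x + t" unfolding z_def using norm_triangle_ineq[of x "(\<sigma> * t) *\<^sub>R axis lastidx 1"] nz by simp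
  then have "norm z < 1" using t by simp
  moreover have "\<sigma> * z $ lastidx > 0"
  proof -
    have "\<sigma> * z $ lastidx = \<sigma> * x $ lastidx + \<sigma> * \<sigma> * t" unfolding z_def by (simp add: algebra_simps)
    also have "\<sigma> * \<sigma> = 1" using sg by auto
    finally show ?thesis using xs t by simp
  qed
  moreover have "dist z x = t" unfolding z_def dist_norm using nz by simp
  ultimately show "\<exists>y\<in>{z \<in> ball 0 1. \<sigma> * z $ lastidx > 0}. dist y x < \<epsilon>" using t by (intro bexI[of _ z]) auto
qed

lemma in_cl_plus:
  fixes x :: "real^'n::{finite,linorder}"
  assumes "x \<in> ball 0 1" "x $ lastidx \<ge> 0"
  shows "x \<in> closure ball_plus"
  using near_closure[of x 1] assms unfolding ball_plus_def by simp

lemma in_cl_minus: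
  fixes x :: "real^'n::{finite,linorder}"
  assumes "x \<in> ball 0 1" "x $ lastidx \<le> 0"
  shows "x \<in> closure ball_minus"
proof -
  have "{z \<in> ball 0 1. (-1) * z $ lastidx > 0} = ball_minus"
    unfolding ball_minus_def by auto
  note eq = this
  have "x \<in> closure {z \<in> ball 0 1. (-1) * z $ lastidx > 0}"
    by (rule near_closure) (use assms in auto)
  then show ?thesis by (simp only: eq)
qed

lemma mixed:
  fixes up um :: "real^'n::{finite,linorder} \<Rightarrow> real"
  assumes L1: "C1-lipschitz_on (closure ball_plus) up" and L2: "C2-lipschitz_on (closure ball_minus) um"
    and eqf: "\<forall>x\<in>flat_bdry. up x = um x"
    and x: "x \<in> ball 0 1" "x $ lastidx \<ge> 0" and y: "y \<in> ball 0 1" "y $ lastidx < 0"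
  shows "dist (up x) (um y) \<le> max C1 C2 * dist x y"
proof -
  define s where "s = x $ lastidx / (x $ lastidx - y $ lastidx)"
  have s: "0 \<le> s" "s < 1" unfolding s_def using x y by (auto simp: field_simps)
  define z where "z = (1 - s) *\<^sub>R x + s *\<^sub>R y"
  have zb: "z \<in> ball 0 1" unfolding z_def by (rule convexD[OF convex_ball x(1) y(1)]) (use s in auto)
  have "z $ lastidx = x $ lastidx - s * (x $ lastidx - y $ lastidx)" unfolding z_def by (simp add: algebra_simps)
  also have "\<dots> = 0" unfolding s_def using x y by (simp add: field_simps)
  finally have zn: "z $ lastidx = 0" .
  have zf: "z \<in> flat_bdry" unfolding flat_bdry_def using zb zn by simp
  have "x - z = s *\<^sub>R (x - y)" unfolding z_def by (simp add: algebra_simps)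
  then have dxz: "dist x z = s * dist x y" using s by (simp add: dist_norm)
  have "z - y = (1 - s) *\<^sub>R (x - y)" unfolding z_def by (simp add: algebra_simps)
  then have dzy: "dist z y = (1 - s) * dist x y" using s by (simp add: dist_norm)
  have a: "dist (up x) (up z) \<le> C1 * dist x z"
    by (rule lipschitz_onD[OF L1 in_cl_plus[OF x] in_cl_plus[OF zb]]) (simp add: zn)
  have b: "dist (um z) (um y) \<le> C2 * dist z y"
    by (rule lipschitz_onD[OF L2 in_cl_minus[OF zb] in_cl_minus[OF y(1)]]) (use zn y in simp_all)
  have c0: "C1 \<ge> 0" "C2 \<ge> 0" using L1 L2 lipschitz_on_nonneg by blast+
  have "dist (up x) (um y) \<le> dist (up x) (up z) + dist (um z) (um y)"
    using eqf zf dist_triangle[of "up x" "um y" "up z"] by simp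
  also have "\<dots> \<le> max C1 C2 * dist x z + max C1 C2 * dist z y"
    using a b c0 by (meson add_mono zero_le_dist max.cobounded1 max.cobounded2 mult_right_mono order_trans)
  also have "\<dots> = max C1 C2 * dist x y" unfolding dxz dzy by (simp add: algebra_simps)
  finally show ?thesis .
qed

theorem mainTheorem9:
  fixes up um :: "real^'n::{finite,linorder} \<Rightarrow> real"
  assumes "CARD('n) \<ge> 3"
    and "\<exists>C. C-lipschitz_on (closure ball_plus) up"
    and "\<exists>C. C-lipschitz_on (closure ball_minus) um"
    and "\<forall>x\<in>closure ball_plus. up x > 0"
    and "\<forall>x\<in>closure ball_minus. um x > 0"
    and "\<forall>x\<in>flat_bdry. up x = um x"
    and "visc_super_bdry (-1) ball_plus up"
    and "visc_super_bdry 1 ball_minus um"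
  shows "(\<exists>C. C-lipschitz_on (ball 0 1) (\<lambda>x. if x $ lastidx \<ge> 0 then up x else um x))
    \<and> visc_super (ball 0 1) (\<lambda>x. if x $ lastidx \<ge> 0 then up x else um x)"
proof -
  define u where "u = (\<lambda>x. if x $ lastidx \<ge> 0 then up x else um x)"
  obtain C1 where L1: "C1-lipschitz_on (closure ball_plus) up" using assms(2) by blast
  obtain C2 where L2: "C2-lipschitz_on (closure ball_minus) um" using assms(3) by blast
  have c0: "C1 \<ge> 0" "C2 \<ge> 0" using L1 L2 lipschitz_on_nonneg by blast+
  have Lu: "(max C1 C2)-lipschitz_on (ball 0 1) u"
  proof (rule lipschitz_onI)
    fix x y :: "real^('n::{finite,linorder})" assume x: "x \<in> ball 0 1" and y: "y \<in> ball 0 1"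
    show "dist (u x) (u y) \<le> max C1 C2 * dist x y"
    proof (cases "x $ lastidx \<ge> 0"; cases "y $ lastidx \<ge> 0")
      assume "x $ lastidx \<ge> 0" "y $ lastidx \<ge> 0"
      then have "dist (up x) (up y) \<le> C1 * dist x y"
        using lipschitz_onD[OF L1 in_cl_plus in_cl_plus] x y by blast
      moreover have "C1 * dist x y \<le> max C1 C2 * dist x y" by (simp add: mult_right_mono)
      ultimately show ?thesis unfolding u_def using \<open>x $ lastidx \<ge> 0\<close> \<open>y $ lastidx \<ge> 0\<close> by simp
    next
      assume "x $ lastidx \<ge> 0" "\<not> y $ lastidx \<ge> 0"
      then show ?thesis unfolding u_def using mixed[OF L1 L2 assms(6) x _ y] by simp
    next
      assume "\<not> x $ lastidx \<ge> 0" "y $ lastidx \<ge> 0"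
      then show ?thesis unfolding u_def using mixed[OF L1 L2 assms(6) y _ x] by (simp add: dist_commute)
    next
      assume "\<not> x $ lastidx \<ge> 0" "\<not> y $ lastidx \<ge> 0"
      then have "dist (um x) (um y) \<le> C2 * dist x y"
        using lipschitz_onD[OF L2 in_cl_minus in_cl_minus] x y by simp
      moreover have "C2 * dist x y \<le> max C1 C2 * dist x y" by (simp add: mult_right_mono)
      ultimately show ?thesis unfolding u_def using \<open>\<not> x $ lastidx \<ge> 0\<close> \<open>\<not> y $ lastidx \<ge> 0\<close> by simp
    qed
  qed (use c0 in auto)
  have vp: "visc_super ball_plus up" using assms(7) unfolding visc_super_bdry_def by blast
  have vm: "visc_super ball_minus um" using assms(8) unfolding visc_super_bdry_def by blast
  have "visc_super (ball 0 1) u"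
    unfolding visc_super_def
  proof (intro conjI allI impI ballI)
    fix x :: "real^('n::{finite,linorder})" assume x: "x \<in> ball 0 1"
    show "u x > 0"
    proof (cases "x $ lastidx \<ge> 0")
      case True then show ?thesis unfolding u_def using assms(4) in_cl_plus[OF x] by simp
    next
      case False then show ?thesis unfolding u_def using assms(5) in_cl_minus[OF x] by simp
    qed
  next
    show "continuous_on (ball 0 1) u" by (rule lipschitz_on_continuous_on[OF Lu])
  next
    fix psi g H e and x :: "real^('n::{finite,linorder})"
    assume A: "x \<in> ball 0 1 \<and> 0 < e \<and> C2_data psi g H (ball x e) \<and>
      (\<forall>y\<in>ball x e \<inter> ball 0 1. 0 \<le> u y - psi y) \<and> u x = psi x"
    then have x: "x \<in> ball 0 1" and e: "0 < e" and C2: "C2_data psi g H (ball x e)"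
      and T: "\<And>y. y \<in> ball x e \<Longrightarrow> y \<in> ball 0 1 \<Longrightarrow> 0 \<le> u y - psi y" and ux: "u x = psi x" by auto
    consider "x $ lastidx > 0" | "x $ lastidx < 0" | "x $ lastidx = 0" by linarith
    then show "eig_in_clGamma2 (schoutenA (psi x) (g x) (H x))"
    proof cases
      case 1
      show ?thesis
      proof (rule super_use[OF vp _ e C2])
        show "x \<in> ball_plus" using x 1 unfolding ball_plus_def by simp
        show "up x = psi x" using ux 1 unfolding u_def by simp
        fix y assume "y \<in> ball x e \<inter> ball_plus"
        then show "0 \<le> up y - psi y" using T[of y] unfolding u_def ball_plus_def by auto
      qed
    next
      case 2
      show ?thesis
      proof (rule super_use[OF vm _ e C2])
        show "x \<in> ball_minus" using x 2 unfolding ball_minus_def by simp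
        show "um x = psi x" using ux 2 unfolding u_def by simp
        fix y assume "y \<in> ball x e \<inter> ball_minus"
        then show "0 \<le> um y - psi y" using T[of y] unfolding u_def ball_minus_def by auto
      qed
    next
      case 3
      have xf: "x \<in> flat_bdry" using x 3 unfolding flat_bdry_def by simp
      have upx: "up x = psi x" using ux 3 unfolding u_def by simp
      show ?thesis
      proof (cases "g x $ lastidx \<ge> 0")
        case True
        show ?thesis
        proof (rule flat_case[OF assms(7) C2 e xf _ upx True])
          show "\<forall>y\<in>ball x e \<inter> ball 0 1. 0 \<le> y $ lastidx \<longrightarrow> 0 \<le> up y - psi y"
          proof (intro ballI impI)
            fix y assume "y \<in> ball x e \<inter> ball 0 1" "0 \<le> y $ lastidx"
            then show "0 \<le> up y - psi y" using T[of y] unfolding u_def by simp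
          qed
          have "x \<in> closure ball_plus" using in_cl_plus[OF x] 3 by simp
          then have "up x > 0" using assms(4) by blast
          then show "psi x > 0" using upx by simp
        qed
      next
        case False
        have "eig_in_clGamma2 (schoutenA (psi x) (g x) (H x)) \<or> 1 * (g x $ lastidx) \<ge> 0"
        proof (rule bdry_use[OF assms(8) xf e C2])
          show "um x = psi x" using upx assms(6) xf by simp
          fix y assume y: "y \<in> ball x e \<inter> (ball_minus \<union> flat_bdry)"
          show "0 \<le> um y - psi y"
          proof (cases "y \<in> flat_bdry")
            case True
            then have "y $ lastidx = 0" "y \<in> ball 0 1" unfolding flat_bdry_def by auto
            then show ?thesis using T[of y] y assms(6) True unfolding u_def by auto
          next
            case False
            then have "y $ lastidx < 0" "y \<in> ball 0 1" using y unfolding ball_minus_def by auto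
            then show ?thesis using T[of y] y unfolding u_def by auto
          qed
        qed
        then show ?thesis using False by simp
      qed
    qed
  qed
  then show ?thesis using Lu unfolding u_def by blast
qed

end
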